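(* Let $(w_{n,k})_{n,k\ge0}$ be an array of complex numbers such that, for some constants $L,M$: $w_{n,k}=0$ for $k>n$; $\lim_{n\to\infty}w_{n,k}=1$ for every $k$; $|w_{n,k}|\le M$ for all $n,k$; and $|w_{n,k}-w_{n,k+1}|\le L/n$ for all $n\ge1,k\ge0$. Let $f(z)=\sum_{k\ge0}a_kz^k$ be holomorphic on $\mathbb D$ and $p_n(z):=\sum_{k=0}^n w_{n,k}a_kz^k$. Let $\zeta\in\overline{\mathbb D}$ with $\mathcal D_\zeta(f)<\infty$. Then $\lim_{n\to\infty}\mathcal D_\zeta(f-p_n)=0$ and $\sup_{n\ge1}\mathcal D_\zeta(f-p_n)\le C^2\mathcal D_\zeta(f)$, where $C$ is a constant depending only on the array $(w_{n,k})$ (not on $f$ or $\zeta$).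
   Context: $\mathbb D$ is the open unit disk, $\mathrm{Hol}(\mathbb D)$ the holomorphic functions on $\mathbb D$, and $H^2$ the Hardy space with $\|\sum b_kz^k\|_{H^2}^2=\sum|b_k|^2$. For $\zeta\in\overline{\mathbb D}$, $\mathcal D_\zeta$ is the set of $f\in\mathrm{Hol}(\mathbb D)$ of the form $f(z)=a+(z-\zeta)g(z)$ with $g\in H^2$, $a\in\mathbb C$; for such $f$ set $\mathcal D_\zeta(f):=\|g\|_{H^2}^2$, and set $\mathcal D_\zeta(f):=\infty$ if $f\notin\mathcal D_\zeta$. *)

theory Defs
  imports "HOL-Analysis.Analysis"
begin

definition taylor_coeff :: "(complex \<Rightarrow> complex) \<Rightarrow> nat \<Rightarrow> complex" where
  "taylor_coeff f k = (deriv ^^ k) f 0 / of_nat (fact k)"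

definition H2 :: "(complex \<Rightarrow> complex) set" where
  "H2 = {g. g holomorphic_on ball 0 1 \<and> summable (\<lambda>k. (cmod (taylor_coeff g k))\<^sup>2)}"

definition H2_norm_sq :: "(complex \<Rightarrow> complex) \<Rightarrow> real" where
  "H2_norm_sq g = (\<Sum>k. (cmod (taylor_coeff g k))\<^sup>2)"

text \<open>Local Dirichlet integral D_zeta(f): the squared H^2 norm of g when f = a + (z - zeta) g on the
  disk with g in H^2 (g is unique for zeta in the closed disk); infinity if no such
  representation exists (INF of the empty set in ennreal is top).\<close>
definition local_dirichlet :: "complex \<Rightarrow> (complex \<Rightarrow> complex) \<Rightarrow> ennreal" where
  "local_dirichlet \<zeta> f =
     (INF g \<in> {g. g \<in> H2 \<and> (\<exists>a. \<forall>z\<in>ball 0 1. f z = a + (z - \<zeta>) * g z)}. ennreal (H2_norm_sq g))"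

end

theory Submission
  imports Defs "HOL-Complex_Analysis.Complex_Analysis"
begin

lemma alg_id:
  fixes W b :: "nat \<Rightarrow> complex"
  shows "(\<Sum>k\<le>n. W k * (if k = 0 then a - \<zeta> * b 0 else b (k - 1) - \<zeta> * b k) * z ^ k)
     = W 0 * a + (z - \<zeta>) * (\<Sum>k\<le>n. W k * b k * z ^ k)
       + (\<Sum>k\<le>n. (W (Suc k) - W k) * b k * z ^ Suc k) - W (Suc n) * b n * z ^ Suc n"
proof (induction n)
  case 0
  then show ?case by (simp add: algebra_simps)
next
  case (Suc n)
  show ?case unfolding sum.atMost_Suc Suc by (simp add: algebra_simps)
qed

lemma Q_id:
  fixes d :: "nat \<Rightarrow> complex"
  shows "(\<Sum>k\<le>n. d k * z ^ Suc k) - (\<Sum>k\<le>n. d k * \<zeta> ^ Suc k)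
     = (z - \<zeta>) * (\<Sum>k\<le>n. d k * (\<Sum>i<Suc k. \<zeta> ^ (k - i) * z ^ i))"
proof -
  have "(\<Sum>k\<le>n. d k * z ^ Suc k) - (\<Sum>k\<le>n. d k * \<zeta> ^ Suc k) = (\<Sum>k\<le>n. d k * (z ^ Suc k - \<zeta> ^ Suc k))"
    by (simp add: sum_subtractf algebra_simps)
  also have "\<dots> = (\<Sum>k\<le>n. d k * ((z - \<zeta>) * (\<Sum>i<Suc k. \<zeta> ^ (Suc k - Suc i) * z ^ i)))"
    by (subst power_diff_sumr2) simp
  also have "\<dots> = (z - \<zeta>) * (\<Sum>k\<le>n. d k * (\<Sum>i<Suc k. \<zeta> ^ (k - i) * z ^ i))"
    by (simp add: sum_distrib_left algebra_simps)
  finally show ?thesis .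
qed

lemma cesaro_l2:
  fixes x :: "nat \<Rightarrow> real"
  assumes nn: "\<And>k. x k \<ge> 0" and sm: "summable (\<lambda>k. (x k)^2)"
  shows "(\<lambda>n. (\<Sum>k\<le>n. x k)^2 / real n) \<longlonglongrightarrow> 0"
proof (rule LIMSEQ_I)
  fix r :: real assume r: "0 < r"
  obtain N where N: "\<And>m n. m \<ge> N \<Longrightarrow> norm (\<Sum>k=m..n. (x k)^2) < r/8"
    using summable_partial_sum_bound[OF sm, of "r/8"] r by auto
  define A where "A = (\<Sum>k<N. x k)"
  have A0: "A \<ge> 0" unfolding A_def by (simp add: nn sum_nonneg)
  define n0 where "n0 = max 1 (nat \<lceil>8 * A^2 / r\<rceil> + 1)"
  have "norm ((\<Sum>k\<le>n. x k)^2 / real n - 0) < r" if n: "n \<ge> n0" for n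
  proof -
    have n1: "n \<ge> 1" using n unfolding n0_def by auto
    have nA: "real n > 8 * A^2 / r" using n unfolding n0_def by linarith
    have split: "(\<Sum>k\<le>n. x k) = (\<Sum>k\<le>n. (if k < N then x k else 0)) + (\<Sum>k\<le>n. (if k < N then 0 else x k))"
      by (simp add: sum.distrib[symmetric]) (intro sum.cong; auto)
    have s1: "(\<Sum>k\<le>n. (if k < N then x k else 0)) \<le> A"
    proof -
      have "(\<Sum>k\<le>n. (if k < N then x k else 0)) = (\<Sum>k\<in>{..n}\<inter>{k. k<N}. x k)"
        by (simp add: sum.If_cases)
      also have "\<dots> \<le> A" unfolding A_def by (rule sum_mono2) (auto simp: nn)
      finally show ?thesis .
    qed
    have s1': "(\<Sum>k\<le>n. (if k < N then x k else 0)) \<ge> 0" by (simp add: sum_nonneg nn)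
    have cs: "(\<Sum>k\<le>n. (if k < N then 0 else x k))^2 \<le> (\<Sum>k\<le>n. (1::real)^2) * (\<Sum>k\<le>n. (if k < N then 0 else x k)^2)"
      using Cauchy_Schwarz_ineq_sum[of "\<lambda>_. 1" "\<lambda>k. (if k < N then 0 else x k)" "{..n}"] by simp
    have t: "(\<Sum>k\<le>n. (if k < N then 0 else x k)^2) \<le> r/8"
    proof (cases "N \<le> n")
      case True
      have "(\<Sum>k\<le>n. (if k < N then 0 else x k)^2) = (\<Sum>k\<in>{..n}\<inter>-{k. k<N}. (x k)^2)"
        by (simp add: sum.If_cases if_distrib[of "\<lambda>t. t^2"])
      also have "{..n}\<inter>-{k. k<N} = {N..n}" by auto
      also have "(\<Sum>k\<in>{N..n}. (x k)^2) \<le> r/8" using N[of N n] by simp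
      finally show ?thesis .
    next
      case False
      then have "(\<Sum>k\<le>n. (if k < N then 0 else x k)^2) = 0" by (intro sum.neutral) auto
      then show ?thesis using r by simp
    qed
    have s2: "(\<Sum>k\<le>n. (if k < N then 0 else x k))^2 \<le> (real n + 1) * (r/8)"
    proof -
      have "(\<Sum>k\<le>n. (1::real)^2) = real n + 1" by simp
      then have "(\<Sum>k\<le>n. (if k < N then 0 else x k))^2 \<le> (real n + 1) * (\<Sum>k\<le>n. (if k < N then 0 else x k)^2)"
        using cs by (simp add: add.commute)
      also have "\<dots> \<le> (real n + 1) * (r/8)" using t by (intro mult_left_mono) auto
      finally show ?thesis .
    qed
    have "(\<Sum>k\<le>n. x k)^2 \<le> 2 * A^2 + 2 * (real n + 1) * (r/8)"
    proof -
      let ?u = "(\<Sum>k\<le>n. (if k < N then x k else 0))" and ?v = "(\<Sum>k\<le>n. (if k < N then 0 else x k))"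
      have "0 \<le> (?u - ?v)^2" by simp
      then have "(?u + ?v)^2 \<le> 2 * ?u^2 + 2 * ?v^2" by (simp add: power2_eq_square algebra_simps)
      moreover have "?u^2 \<le> A^2" using s1 s1' by (simp add: power_mono)
      ultimately show ?thesis unfolding split using s2 by linarith
    qed
    then have "(\<Sum>k\<le>n. x k)^2 / real n \<le> (2 * A^2 + 2 * (real n + 1) * (r/8)) / real n"
      using n1 by (simp add: divide_right_mono)
    also have "\<dots> = 2 * A^2 / real n + (r/4) * ((real n + 1) / real n)"
    proof -
      have "real n \<noteq> 0" using n1 by simp
      then show ?thesis by (simp add: field_simps)
    qed
    also have "\<dots> < r"
    proof -
      have "2 * A^2 / real n < r/4"
      proof -
        have "8 * A^2 < r * real n" using nA r by (simp add: field_simps)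
        then show ?thesis using n1 by (simp add: field_simps)
      qed
      moreover have "(real n + 1) / real n \<le> 2" using n1 by (simp add: field_simps)
      then have "r/4 * ((real n + 1) / real n) \<le> r/4 * 2" using r by (intro mult_left_mono) auto
      ultimately show ?thesis using r by linarith
    qed
    finally show ?thesis by (simp add: sum_nonneg nn)
  qed
  then show "\<exists>no. \<forall>n\<ge>no. norm ((\<Sum>k\<le>n. x k)^2 / real n - 0) < r" by blast
qed

lemma tc_exp: "h has_fps_expansion H \<Longrightarrow> taylor_coeff h k = H $ k"
  unfolding taylor_coeff_def using fps_nth_fps_expansion[of h H k] by simp

lemma holo_exp:
  assumes "g holomorphic_on ball 0 1"
  shows "g has_fps_expansion fps_expansion g 0"
proof -
  have "g analytic_on ball 0 1" using assms analytic_on_open[of "ball 0 1"] by simp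
  then have "g analytic_on {0}" by (rule analytic_on_subset) auto
  then show ?thesis by (rule analytic_at_imp_has_fps_expansion_0)
qed

lemma test:
  fixes f g :: "complex \<Rightarrow> complex" and W :: "nat \<Rightarrow> complex" and a \<zeta> :: complex
  assumes g: "g holomorphic_on ball 0 1" and rep: "\<forall>z\<in>ball 0 1. f z = a + (z - \<zeta>) * g z"
    and W0: "\<forall>k>n. W k = 0"
  defines "b \<equiv> \<lambda>k. taylor_coeff g k"
  defines "e \<equiv> \<lambda>k. W (Suc k) - W k"
  defines "h \<equiv> \<lambda>z. g z - (\<Sum>k\<le>n. W k * b k * z^k) - (\<Sum>k\<le>n. e k * b k * (\<Sum>i<Suc k. \<zeta>^(k-i) * z^i))"
  defines "cc \<equiv> \<lambda>j. (\<Sum>k\<le>n. e k * b k * (if j \<le> k then \<zeta>^(k-j) else 0))"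
  shows "taylor_coeff f k = (if k = 0 then a - \<zeta> * b 0 else b (k-1) - \<zeta> * b k)"
    and "taylor_coeff h j = (1 - W j) * b j - cc j"
proof -
  define G where "G = fps_expansion g 0"
  have hg: "g has_fps_expansion G" unfolding G_def by (rule holo_exp[OF g])
  have bG: "b k = G $ k" for k unfolding b_def by (rule tc_exp[OF hg])
  have h1: "(\<lambda>z. a + (z - \<zeta>) * g z) has_fps_expansion fps_const a + (fps_X - fps_const \<zeta>) * G"
    by (intro fps_expansion_intros hg)
  have ev: "eventually (\<lambda>z. f z = a + (z - \<zeta>) * g z) (nhds 0)"
    using eventually_nhds_in_open[of "ball 0 1" 0] rep by (auto elim!: eventually_mono)
  have hf: "f has_fps_expansion fps_const a + (fps_X - fps_const \<zeta>) * G"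
    using h1 has_fps_expansion_cong[OF ev refl] by simp
  show "taylor_coeff f k = (if k = 0 then a - \<zeta> * b 0 else b (k-1) - \<zeta> * b k)"
    unfolding tc_exp[OF hf] bG by (simp add: algebra_simps)
  have hh: "h has_fps_expansion G - (\<Sum>k\<le>n. fps_const (W k * b k) * fps_X^k)
      - (\<Sum>k\<le>n. fps_const (e k * b k) * (\<Sum>i<Suc k. fps_const (\<zeta>^(k-i)) * fps_X^i))"
    unfolding h_def
    by (intro has_fps_expansion_diff has_fps_expansion_sum has_fps_expansion_cmult_left has_fps_expansion_fps_X_power hg)
  show "taylor_coeff h j = (1 - W j) * b j - cc j"
  proof -
    have cx: "(fps_const c * fps_X^k) $ j = (if j = k then c else 0)" for c :: complex and k by simp
    have s1: "(\<Sum>k\<le>n. fps_const (W k * b k) * fps_X^k) $ j = W j * b j"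
      unfolding fps_sum_nth cx using W0 by (simp add: sum.delta)
    have s2: "(\<Sum>i<Suc k. fps_const (\<zeta>^(k-i)) * fps_X^i) $ j = (if j \<le> k then \<zeta>^(k-j) else 0)" for k
      unfolding fps_sum_nth cx by (simp add: sum.delta)
    have s3: "(\<Sum>k\<le>n. fps_const (e k * b k) * (\<Sum>i<Suc k. fps_const (\<zeta>^(k-i)) * fps_X^i)) $ j = cc j"
      unfolding fps_sum_nth[of _ "{..n}"] fps_mult_left_const_nth s2 cc_def by (rule refl)
    show ?thesis unfolding tc_exp[OF hh] bG[symmetric] fps_sub_nth s1 s3
      by (simp add: algebra_simps)
  qed
qed

lemma key:
  fixes f g :: "complex \<Rightarrow> complex" and W :: "nat \<Rightarrow> complex" and a \<zeta> :: complex and M E :: real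
  assumes gH: "g \<in> H2" and rep: "\<forall>z\<in>ball 0 1. f z = a + (z - \<zeta>) * g z"
    and W0: "\<forall>k>n. W k = 0" and Wb: "\<forall>k. cmod (W k) \<le> M" and We: "\<forall>k. cmod (W k - W (Suc k)) \<le> E"
    and zeta: "cmod \<zeta> \<le> 1"
  shows "\<exists>h c. h \<in> H2 \<and> (\<forall>z\<in>ball 0 1. f z - (\<Sum>k\<le>n. W k * taylor_coeff f k * z^k) = c + (z-\<zeta>) * h z)
          \<and> H2_norm_sq h \<le> 2 * (\<Sum>j. (cmod (1 - W j))\<^sup>2 * (cmod (taylor_coeff g j))\<^sup>2)
                          + 2 * (real n + 1) * (E * (\<Sum>k\<le>n. cmod (taylor_coeff g k)))\<^sup>2"
proof -
  have g: "g holomorphic_on ball 0 1" and bsum: "summable (\<lambda>k. (cmod (taylor_coeff g k))\<^sup>2)"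
    using gH by (auto simp: H2_def)
  define b where "b \<equiv> \<lambda>k. taylor_coeff g k"
  define e where "e \<equiv> \<lambda>k. W (Suc k) - W k"
  define h where "h \<equiv> \<lambda>z. g z - (\<Sum>k\<le>n. W k * b k * z^k) - (\<Sum>k\<le>n. e k * b k * (\<Sum>i<Suc k. \<zeta>^(k-i) * z^i))"
  define cc where "cc \<equiv> \<lambda>j. (\<Sum>k\<le>n. e k * b k * (if j \<le> k then \<zeta>^(k-j) else 0))"
  define c where "c = a * (1 - W 0) - (\<Sum>k\<le>n. e k * b k * \<zeta> ^ Suc k)"
  have tc1: "taylor_coeff f k = (if k = 0 then a - \<zeta> * b 0 else b (k-1) - \<zeta> * b k)" for k
    unfolding b_def by (rule test(1)[OF g rep W0])
  have tc2: "taylor_coeff h j = (1 - W j) * b j - cc j" for j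
    unfolding h_def b_def cc_def e_def by (rule test(2)[OF g rep W0])
  have M0: "M \<ge> 0" using Wb norm_ge_zero order_trans by blast
  have E0: "E \<ge> 0" using We norm_ge_zero order_trans by blast
  have ident: "f z - (\<Sum>k\<le>n. W k * taylor_coeff f k * z^k) = c + (z-\<zeta>) * h z" if z: "z \<in> ball 0 1" for z
  proof -
    have "(\<Sum>k\<le>n. W k * taylor_coeff f k * z^k)
        = (\<Sum>k\<le>n. W k * (if k = 0 then a - \<zeta> * b 0 else b (k - 1) - \<zeta> * b k) * z ^ k)"
      using tc1 by simp
    also have "\<dots> = W 0 * a + (z - \<zeta>) * (\<Sum>k\<le>n. W k * b k * z ^ k)
       + (\<Sum>k\<le>n. e k * b k * z ^ Suc k)"
      unfolding alg_id e_def using W0 by simp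
    finally have p: "(\<Sum>k\<le>n. W k * taylor_coeff f k * z^k) = W 0 * a + (z - \<zeta>) * (\<Sum>k\<le>n. W k * b k * z ^ k)
       + (\<Sum>k\<le>n. e k * b k * z ^ Suc k)" .
    have q: "(\<Sum>k\<le>n. e k * b k * z ^ Suc k) = (\<Sum>k\<le>n. e k * b k * \<zeta> ^ Suc k)
       + (z - \<zeta>) * (\<Sum>k\<le>n. e k * b k * (\<Sum>i<Suc k. \<zeta> ^ (k - i) * z ^ i))"
      using Q_id[where d="\<lambda>k. e k * b k" and n=n and z=z and \<zeta>=\<zeta>] by (simp add: algebra_simps)
    show ?thesis unfolding p q using rep z by (simp add: h_def c_def algebra_simps)
  qed
  define B where "B = (\<Sum>k\<le>n. cmod (b k))"
  have ccb: "cmod (cc j) \<le> E * B" for j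
  proof -
    have "cmod (cc j) \<le> (\<Sum>k\<le>n. cmod (e k * b k * (if j \<le> k then \<zeta>^(k-j) else 0)))"
      unfolding cc_def by (rule norm_sum)
    also have "\<dots> \<le> (\<Sum>k\<le>n. E * cmod (b k))"
    proof (rule sum_mono)
      fix k
      have "cmod (if j \<le> k then \<zeta>^(k-j) else 0) \<le> 1"
        using zeta by (auto simp: norm_power power_le_one)
      moreover have "cmod (e k) \<le> E" using We[rule_format, of k] by (simp add: e_def norm_minus_commute)
      ultimately show "cmod (e k * b k * (if j \<le> k then \<zeta>^(k-j) else 0)) \<le> E * cmod (b k)"
      proof -
        have "cmod (e k) * cmod (b k) * cmod (if j \<le> k then \<zeta>^(k-j) else 0) \<le> cmod (e k) * cmod (b k)"
          using \<open>cmod (if j \<le> k then \<zeta>^(k-j) else 0) \<le> 1\<close> by (intro mult_left_le) auto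
        also have "\<dots> \<le> E * cmod (b k)" using \<open>cmod (e k) \<le> E\<close> by (intro mult_right_mono) auto
        finally show ?thesis unfolding norm_mult .
      qed
    qed
    finally show ?thesis by (simp add: B_def sum_distrib_left)
  qed
  have cc0: "cc j = 0" if "j > n" for j
    unfolding cc_def using that by (intro sum.neutral) auto
  define X where "X = (\<lambda>j. (cmod (1 - W j))\<^sup>2 * (cmod (b j))\<^sup>2)"
  define Y where "Y = (\<lambda>j. (cmod (cc j))\<^sup>2)"
  have Xb: "X j \<le> (1 + M)\<^sup>2 * (cmod (b j))\<^sup>2" for j
  proof -
    have "cmod (1 - W j) \<le> 1 + M" using norm_triangle_ineq4[of 1 "W j"] Wb[rule_format, of j] by simp
    then have "(cmod (1 - W j))\<^sup>2 \<le> (1 + M)\<^sup>2" by (simp add: power_mono)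
    then show ?thesis unfolding X_def by (simp add: mult_right_mono)
  qed
  have Xs: "summable X"
    by (rule summable_comparison_test[where g="\<lambda>j. (1 + M)\<^sup>2 * (cmod (b j))\<^sup>2"])
       (use Xb bsum in \<open>auto simp: X_def b_def intro!: summable_mult\<close>)
  have Ys: "summable Y" by (rule summable_finite[of "{..n}"]) (auto simp: Y_def cc0)
  have Ysum: "suminf Y = (\<Sum>j\<le>n. Y j)" by (rule suminf_finite) (auto simp: Y_def cc0)
  have Ybnd: "(\<Sum>j\<le>n. Y j) \<le> (real n + 1) * (E * B)\<^sup>2"
  proof -
    have "(\<Sum>j\<le>n. Y j) \<le> of_nat (card {..n}) * (E * B)\<^sup>2"
      by (rule sum_bounded_above) (use ccb in \<open>auto simp: Y_def intro!: power_mono\<close>)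
    then show ?thesis by (simp add: add.commute)
  qed
  have pt: "(cmod (taylor_coeff h j))\<^sup>2 \<le> 2 * X j + 2 * Y j" for j
  proof -
    have "cmod (taylor_coeff h j) \<le> cmod (1 - W j) * cmod (b j) + cmod (cc j)"
    proof -
      have "cmod ((1-W j)*b j - cc j) \<le> cmod ((1-W j)*b j) + cmod (cc j)" by (rule norm_triangle_ineq4)
      then show ?thesis by (simp add: tc2 norm_mult)
    qed
    moreover have "(u + v)\<^sup>2 \<le> 2 * u\<^sup>2 + 2 * v\<^sup>2" for u v :: real
    proof -
      have "0 \<le> (u - v)\<^sup>2" by simp
      then show ?thesis by (simp add: power2_eq_square algebra_simps)
    qed
    ultimately have "(cmod (taylor_coeff h j))\<^sup>2 \<le> 2 * (cmod (1 - W j) * cmod (b j))\<^sup>2 + 2 * (cmod (cc j))\<^sup>2"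
    proof -
      assume a1: "cmod (taylor_coeff h j) \<le> cmod (1 - W j) * cmod (b j) + cmod (cc j)"
        and a2: "\<And>u v :: real. (u + v)\<^sup>2 \<le> 2 * u\<^sup>2 + 2 * v\<^sup>2"
      have "(cmod (taylor_coeff h j))\<^sup>2 \<le> (cmod (1 - W j) * cmod (b j) + cmod (cc j))\<^sup>2"
        using a1 by (intro power_mono) auto
      then show ?thesis using a2[of "cmod (1 - W j) * cmod (b j)" "cmod (cc j)"] by linarith
    qed
    then show ?thesis unfolding X_def Y_def by (simp add: power_mult_distrib)
  qed
  have XYs: "summable (\<lambda>j. 2 * X j + 2 * Y j)" using Xs Ys by (intro summable_add summable_mult)
  have hs: "summable (\<lambda>j. (cmod (taylor_coeff h j))\<^sup>2)"
    by (rule summable_comparison_test[OF _ XYs]) (use pt in auto)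
  have hhol: "h holomorphic_on ball 0 1" unfolding h_def using g by (intro holomorphic_intros)
  have hH: "h \<in> H2" using hs hhol by (simp add: H2_def)
  have "H2_norm_sq h \<le> (\<Sum>j. 2 * X j + 2 * Y j)"
    unfolding H2_norm_sq_def by (rule suminf_le[OF pt hs XYs])
  also have "\<dots> = 2 * suminf X + 2 * suminf Y"
    using Xs Ys by (simp add: suminf_add[symmetric] suminf_mult summable_mult)
  also have "\<dots> \<le> 2 * suminf X + 2 * ((real n + 1) * (E * B)\<^sup>2)" using Ysum Ybnd by simp
  finally have nb: "H2_norm_sq h \<le> 2 * suminf X + 2 * (real n + 1) * (E * B)\<^sup>2" by (simp only: mult.assoc)
  show ?thesis
    using hH ident nb unfolding X_def B_def b_def by blast
qed

lemma bnd:
  fixes w :: "nat \<Rightarrow> nat \<Rightarrow> complex" and L M :: real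
  assumes A1: "\<And>n k. k > n \<Longrightarrow> w n k = 0"
    and A3: "\<And>n k. cmod (w n k) \<le> M"
    and A4: "\<And>n k. n \<ge> 1 \<Longrightarrow> cmod (w n k - w n (Suc k)) \<le> L / real n"
    and gH: "g \<in> H2" and rep: "\<forall>z\<in>ball 0 1. f z = a + (z - \<zeta>) * g z"
    and zeta: "cmod \<zeta> \<le> 1" and n: "n \<ge> 1"
  shows "local_dirichlet \<zeta> (\<lambda>z. f z - (\<Sum>k\<le>n. w n k * taylor_coeff f k * z^k))
     \<le> ennreal (2 * (\<Sum>j. (cmod (1 - w n j))\<^sup>2 * (cmod (taylor_coeff g j))\<^sup>2)
                          + 2 * (real n + 1) * (L / real n * (\<Sum>k\<le>n. cmod (taylor_coeff g k)))\<^sup>2)"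
proof -
  obtain h c where hH: "h \<in> H2"
    and id: "\<forall>z\<in>ball 0 1. f z - (\<Sum>k\<le>n. w n k * taylor_coeff f k * z^k) = c + (z-\<zeta>) * h z"
    and nb: "H2_norm_sq h \<le> 2 * (\<Sum>j. (cmod (1 - w n j))\<^sup>2 * (cmod (taylor_coeff g j))\<^sup>2)
                          + 2 * (real n + 1) * (L / real n * (\<Sum>k\<le>n. cmod (taylor_coeff g k)))\<^sup>2"
    using key[OF gH rep, of n "w n" M "L / real n"] A1 A3 A4[OF n] zeta by blast
  have "local_dirichlet \<zeta> (\<lambda>z. f z - (\<Sum>k\<le>n. w n k * taylor_coeff f k * z^k)) \<le> ennreal (H2_norm_sq h)"
    unfolding local_dirichlet_def by (rule INF_lower) (use hH id in blast)
  also have "\<dots> \<le> ennreal (2 * (\<Sum>j. (cmod (1 - w n j))\<^sup>2 * (cmod (taylor_coeff g j))\<^sup>2)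
                          + 2 * (real n + 1) * (L / real n * (\<Sum>k\<le>n. cmod (taylor_coeff g k)))\<^sup>2)"
    using nb by (rule ennreal_leI)
  finally show ?thesis .
qed

lemma sup_est:
  fixes w :: "nat \<Rightarrow> nat \<Rightarrow> complex" and L M :: real
  assumes A3: "\<And>n k. cmod (w n k) \<le> M"
    and gH: "g \<in> H2" and n: "n \<ge> 1" and L0: "L \<ge> 0"
  shows "2 * (\<Sum>j. (cmod (1 - w n j))\<^sup>2 * (cmod (taylor_coeff g j))\<^sup>2)
                          + 2 * (real n + 1) * (L / real n * (\<Sum>k\<le>n. cmod (taylor_coeff g k)))\<^sup>2
         \<le> (2 * (1 + M)\<^sup>2 + 8 * L\<^sup>2) * H2_norm_sq g"
proof -
  define b where "b = (\<lambda>k. cmod (taylor_coeff g k))"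
  have bs: "summable (\<lambda>k. (b k)\<^sup>2)" using gH by (simp add: H2_def b_def)
  have S: "H2_norm_sq g = (\<Sum>k. (b k)\<^sup>2)" by (simp add: H2_norm_sq_def b_def)
  have M0: "M \<ge> 0" using A3[of 0 0] norm_ge_zero order_trans by blast
  have Xb: "(cmod (1 - w n j))\<^sup>2 * (b j)\<^sup>2 \<le> (1 + M)\<^sup>2 * (b j)\<^sup>2" for j
  proof -
    have "cmod (1 - w n j) \<le> 1 + M" using norm_triangle_ineq4[of 1 "w n j"] A3[of n j] by simp
    then have "(cmod (1 - w n j))\<^sup>2 \<le> (1 + M)\<^sup>2" by (simp add: power_mono)
    then show ?thesis by (simp add: mult_right_mono)
  qed
  have X: "(\<Sum>j. (cmod (1 - w n j))\<^sup>2 * (b j)\<^sup>2) \<le> (1 + M)\<^sup>2 * (\<Sum>k. (b k)\<^sup>2)"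
  proof -
    have s2: "summable (\<lambda>j. (1 + M)\<^sup>2 * (b j)\<^sup>2)" using bs by (rule summable_mult)
    have s1: "summable (\<lambda>j. (cmod (1 - w n j))\<^sup>2 * (b j)\<^sup>2)"
      by (rule summable_comparison_test[OF _ s2]) (use Xb in auto)
    have "(\<Sum>j. (cmod (1 - w n j))\<^sup>2 * (b j)\<^sup>2) \<le> (\<Sum>j. (1 + M)\<^sup>2 * (b j)\<^sup>2)"
      by (rule suminf_le[OF Xb s1 s2])
    also have "\<dots> = (1 + M)\<^sup>2 * (\<Sum>k. (b k)\<^sup>2)" using bs by (rule suminf_mult)
    finally show ?thesis .
  qed
  have B: "(\<Sum>k\<le>n. b k)\<^sup>2 \<le> (real n + 1) * (\<Sum>k. (b k)\<^sup>2)"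
  proof -
    have "(\<Sum>k\<le>n. 1 * b k)\<^sup>2 \<le> (\<Sum>k\<le>n. 1\<^sup>2) * (\<Sum>k\<le>n. (b k)\<^sup>2)"
      by (rule Cauchy_Schwarz_ineq_sum)
    also have "\<dots> \<le> (real n + 1) * (\<Sum>k. (b k)\<^sup>2)"
      using sum_le_suminf[OF bs, of "{..n}"] by (simp add: add.commute mult_left_mono)
    finally show ?thesis by simp
  qed
  have Y: "(real n + 1) * (L / real n * (\<Sum>k\<le>n. b k))\<^sup>2 \<le> 4 * L\<^sup>2 * (\<Sum>k. (b k)\<^sup>2)"
  proof -
    have nn: "real n \<ge> 1" using n by simp
    have "(real n + 1) * (L / real n * (\<Sum>k\<le>n. b k))\<^sup>2 = (real n + 1) * (L / real n)\<^sup>2 * (\<Sum>k\<le>n. b k)\<^sup>2"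
      by (simp only: power_mult_distrib)
    also have "\<dots> \<le> (real n + 1) * (L / real n)\<^sup>2 * ((real n + 1) * (\<Sum>k. (b k)\<^sup>2))"
      using B by (intro mult_left_mono) auto
    also have "\<dots> = ((real n + 1) / real n)\<^sup>2 * L\<^sup>2 * (\<Sum>k. (b k)\<^sup>2)"
      by (simp add: power2_eq_square field_simps)
    also have "\<dots> \<le> 2\<^sup>2 * L\<^sup>2 * (\<Sum>k. (b k)\<^sup>2)"
    proof (intro mult_right_mono power_mono)
      show "(real n + 1) / real n \<le> 2" using nn by (simp add: field_simps)
    qed (auto intro!: suminf_nonneg bs)
    finally show ?thesis by simp
  qed
  have e1: "2 * (real n + 1) * (L / real n * (\<Sum>k\<le>n. b k))\<^sup>2 = 2 * ((real n + 1) * (L / real n * (\<Sum>k\<le>n. b k))\<^sup>2)" by simp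
  have e2: "(2 * (1 + M)\<^sup>2 + 8 * L\<^sup>2) * (\<Sum>k. (b k)\<^sup>2) = 2 * ((1 + M)\<^sup>2 * (\<Sum>k. (b k)\<^sup>2)) + 2 * (4 * L\<^sup>2 * (\<Sum>k. (b k)\<^sup>2))"
    by (simp add: algebra_simps)
  show ?thesis using X Y e1 e2 unfolding S b_def by linarith
qed

lemma lim_est:
  fixes w :: "nat \<Rightarrow> nat \<Rightarrow> complex" and L M :: real
  assumes A2: "\<And>k. (\<lambda>n. w n k) \<longlonglongrightarrow> 1"
    and A3: "\<And>n k. cmod (w n k) \<le> M"
    and gH: "g \<in> H2"
  shows "(\<lambda>n. 2 * (\<Sum>j. (cmod (1 - w n j))\<^sup>2 * (cmod (taylor_coeff g j))\<^sup>2)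
            + 4 * L\<^sup>2 * ((\<Sum>k\<le>n. cmod (taylor_coeff g k))\<^sup>2 / real n)) \<longlonglongrightarrow> 0"
proof -
  define b where "b = (\<lambda>k. cmod (taylor_coeff g k))"
  have bs: "summable (\<lambda>k. (b k)\<^sup>2)" using gH by (simp add: H2_def b_def)
  have lim1: "(\<lambda>n. (cmod (1 - w n k))\<^sup>2 * (b k)\<^sup>2) \<longlonglongrightarrow> 0" for k
  proof -
    have "(\<lambda>n. 1 - w n k) \<longlonglongrightarrow> 1 - 1" by (intro tendsto_intros A2)
    then have "(\<lambda>n. cmod (1 - w n k)) \<longlonglongrightarrow> 0" by (simp add: tendsto_norm_zero)
    then have "(\<lambda>n. (cmod (1 - w n k))\<^sup>2 * (b k)\<^sup>2) \<longlonglongrightarrow> 0\<^sup>2 * (b k)\<^sup>2" by (intro tendsto_intros)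
    then show ?thesis by simp
  qed
  have bound: "norm ((cmod (1 - w n k))\<^sup>2 * (b k)\<^sup>2) \<le> (1 + M)\<^sup>2 * (b k)\<^sup>2" for n k
  proof -
    have "cmod (1 - w n k) \<le> 1 + M" using norm_triangle_ineq4[of 1 "w n k"] A3[of n k] by simp
    then have "(cmod (1 - w n k))\<^sup>2 \<le> (1 + M)\<^sup>2" by (simp add: power_mono)
    then show ?thesis by (simp add: mult_right_mono)
  qed
  have ev: "eventually (\<lambda>(k,n). norm ((cmod (1 - w n k))\<^sup>2 * (b k)\<^sup>2) \<le> (1 + M)\<^sup>2 * (b k)\<^sup>2)
               (at_top \<times>\<^sub>F sequentially)"
    by (rule always_eventually) (simp only: split_beta bound simp_thms)
  have sm: "summable (\<lambda>k. (1 + M)\<^sup>2 * (b k)\<^sup>2)" using bs by (rule summable_mult)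
  have T0: "(\<lambda>n. \<Sum>k. (cmod (1 - w n k))\<^sup>2 * (b k)\<^sup>2) \<longlonglongrightarrow> (\<Sum>k. (0::real))"
    using tannerys_theorem[where a="\<lambda>k n. (cmod (1 - w n k))\<^sup>2 * (b k)\<^sup>2" and b="\<lambda>_. 0"
        and M="\<lambda>k. (1 + M)\<^sup>2 * (b k)\<^sup>2" and F=sequentially, OF lim1 ev sm trivial_limit_sequentially]
    by blast
  have T: "(\<lambda>n. \<Sum>k. (cmod (1 - w n k))\<^sup>2 * (b k)\<^sup>2) \<longlonglongrightarrow> 0" using T0 by simp
  have C: "(\<lambda>n. (\<Sum>k\<le>n. b k)\<^sup>2 / real n) \<longlonglongrightarrow> 0"
    by (rule cesaro_l2) (auto simp: b_def bs[unfolded b_def])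
  have "(\<lambda>n. 2 * (\<Sum>k. (cmod (1 - w n k))\<^sup>2 * (b k)\<^sup>2) + 4 * L\<^sup>2 * ((\<Sum>k\<le>n. b k)\<^sup>2 / real n))
        \<longlonglongrightarrow> 2 * 0 + 4 * L\<^sup>2 * 0"
    using T C by (intro tendsto_intros) auto
  then show ?thesis by (simp add: b_def)
qed

lemma Y_le:
  assumes n: "n \<ge> (1::nat)"
  shows "2 * (real n + 1) * (L / real n * B)\<^sup>2 \<le> 4 * L\<^sup>2 * (B\<^sup>2 / real n)"
proof -
  have nn: "real n \<ge> 1" using n by simp
  have "2 * (real n + 1) * (L / real n * B)\<^sup>2 = 2 * ((real n + 1) / real n) * (L\<^sup>2 * (B\<^sup>2 / real n))"
    using nn by (simp add: power2_eq_square field_simps)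
  also have "\<dots> \<le> 2 * 2 * (L\<^sup>2 * (B\<^sup>2 / real n))"
    using nn by (intro mult_right_mono mult_left_mono) (auto simp: field_simps)
  finally show ?thesis by simp
qed

theorem mainTheorem8:
  fixes w :: "nat \<Rightarrow> nat \<Rightarrow> complex" and L M :: real
  assumes "\<And>n k. k > n \<Longrightarrow> w n k = 0"
    and "\<And>k. (\<lambda>n. w n k) \<longlonglongrightarrow> 1"
    and "\<And>n k. cmod (w n k) \<le> M"
    and "\<And>n k. n \<ge> 1 \<Longrightarrow> cmod (w n k - w n (Suc k)) \<le> L / real n"
  shows "\<exists>C::real. \<forall>(f :: complex \<Rightarrow> complex) (\<zeta> :: complex).
           f holomorphic_on ball 0 1 \<longrightarrow> cmod \<zeta> \<le> 1 \<longrightarrow> local_dirichlet \<zeta> f < \<infinity> \<longrightarrow>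
           (let p = (\<lambda>n z. \<Sum>k\<le>n. w n k * taylor_coeff f k * z ^ k) in
             ((\<lambda>n. local_dirichlet \<zeta> (\<lambda>z. f z - p n z)) \<longlonglongrightarrow> 0) \<and>
             (\<forall>n\<ge>1. local_dirichlet \<zeta> (\<lambda>z. f z - p n z) \<le> ennreal (C\<^sup>2) * local_dirichlet \<zeta> f))"
proof -
  note A = assms
  have M0: "M \<ge> 0" using A(3)[of 0 0] norm_ge_zero order_trans by blast
  have L0: "L \<ge> 0"
  proof -
    have "cmod (w 1 0 - w 1 (Suc 0)) \<le> L / real 1" by (rule A(4)) simp
    moreover have "0 \<le> cmod (w 1 0 - w 1 (Suc 0))" by simp
    moreover have "L / real 1 = L" by simp
    ultimately show ?thesis by linarith
  qed
  define K where "K = 2 * (1 + M)\<^sup>2 + 8 * L\<^sup>2"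
  have K0: "K \<ge> 0" unfolding K_def by simp
  show ?thesis
  proof (intro exI[of _ "sqrt K"] allI impI)
    fix f :: "complex \<Rightarrow> complex" and \<zeta> :: complex
    assume fh: "f holomorphic_on ball 0 1" and zeta: "cmod \<zeta> \<le> 1" and fin: "local_dirichlet \<zeta> f < \<infinity>"
    define S where "S = {g. g \<in> H2 \<and> (\<exists>a. \<forall>z\<in>ball 0 1. f z = a + (z - \<zeta>) * g z)}"
    have LD: "local_dirichlet \<zeta> f = (INF g\<in>S. ennreal (H2_norm_sq g))"
      by (simp add: local_dirichlet_def S_def)
    have Sne: "S \<noteq> {}" using fin LD by auto
    define D where "D = (\<lambda>n. local_dirichlet \<zeta> (\<lambda>z. f z - (\<Sum>k\<le>n. w n k * taylor_coeff f k * z ^ k)))"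
    have Dg: "D n \<le> ennreal (K * H2_norm_sq g)" if g: "g \<in> S" and n: "n \<ge> 1" for g n
    proof -
      from g obtain a where gH: "g \<in> H2" and rep: "\<forall>z\<in>ball 0 1. f z = a + (z - \<zeta>) * g z"
        unfolding S_def by blast
      show ?thesis unfolding D_def
        using bnd[where w=w and M=M and L=L and g=g and f=f and a=a and \<zeta>=\<zeta> and n=n, OF A(1) A(3) A(4) gH rep zeta n] sup_est[where w=w and M=M and L=L and g=g and n=n, OF A(3) gH n L0]
        by (simp add: K_def order_trans ennreal_leI)
    qed
    have sup: "D n \<le> ennreal K * local_dirichlet \<zeta> f" if n: "n \<ge> 1" for n
    proof -
      let ?X = "(\<lambda>g. ennreal (H2_norm_sq g)) ` S"
      have mono: "mono (\<lambda>x::ennreal. ennreal K * x)" by (auto simp: mono_def mult_left_mono)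
      have cont: "continuous (at_right (Inf ?X)) (\<lambda>x::ennreal. ennreal K * x)"
      proof -
        have "continuous_on UNIV (\<lambda>x::ennreal. ennreal K * x)"
          by (intro ennreal_continuous_on_cmult continuous_on_id) simp
        then have "continuous (at (Inf ?X) within UNIV) (\<lambda>x::ennreal. ennreal K * x)"
          by (simp add: continuous_on_eq_continuous_within)
        then show ?thesis by (rule continuous_within_subset) simp
      qed
      have eq: "ennreal K * Inf ?X = Inf ((\<lambda>x. ennreal K * x) ` ?X)"
        by (rule continuous_at_Inf_mono[OF mono cont]) (use Sne in auto)
      have "D n \<le> Inf ((\<lambda>x. ennreal K * x) ` ?X)"
      proof (rule Inf_greatest)
        fix y assume "y \<in> (\<lambda>x. ennreal K * x) ` ?X"
        then obtain g where g: "g \<in> S" and y: "y = ennreal K * ennreal (H2_norm_sq g)" by auto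
        have "H2_norm_sq g \<ge> 0" using g unfolding S_def H2_def H2_norm_sq_def
          by (auto intro!: suminf_nonneg)
        then have "y = ennreal (K * H2_norm_sq g)" using y K0 by (simp add: ennreal_mult)
        then show "D n \<le> y" using Dg[OF g n] by simp
      qed
      then show ?thesis unfolding LD eq[symmetric] .
    qed
    obtain g where gS: "g \<in> S" using Sne by auto
    then obtain a where gH: "g \<in> H2" and rep: "\<forall>z\<in>ball 0 1. f z = a + (z - \<zeta>) * g z"
      unfolding S_def by blast
    define R where "R = (\<lambda>n. 2 * (\<Sum>j. (cmod (1 - w n j))\<^sup>2 * (cmod (taylor_coeff g j))\<^sup>2)
            + 4 * L\<^sup>2 * ((\<Sum>k\<le>n. cmod (taylor_coeff g k))\<^sup>2 / real n))"
    have Rlim: "R \<longlonglongrightarrow> 0" unfolding R_def by (rule lim_est[OF A(2) A(3) gH])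
    have DR: "D n \<le> ennreal (R n)" if n: "n \<ge> 1" for n
    proof -
      have "D n \<le> ennreal (2 * (\<Sum>j. (cmod (1 - w n j))\<^sup>2 * (cmod (taylor_coeff g j))\<^sup>2)
                          + 2 * (real n + 1) * (L / real n * (\<Sum>k\<le>n. cmod (taylor_coeff g k)))\<^sup>2)"
        unfolding D_def by (rule bnd[where w=w and M=M and L=L and g=g and f=f and a=a and \<zeta>=\<zeta> and n=n, OF A(1) A(3) A(4) gH rep zeta n])
      also have "\<dots> \<le> ennreal (R n)"
        unfolding R_def using Y_le[OF n, of L "\<Sum>k\<le>n. cmod (taylor_coeff g k)"]
        by (intro ennreal_leI) linarith
      finally show ?thesis .
    qed
    have Dlim: "D \<longlonglongrightarrow> 0"
    proof (rule tendsto_sandwich[of "\<lambda>_. 0" D sequentially "\<lambda>n. ennreal (R n)"])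
      show "\<forall>\<^sub>F n in sequentially. 0 \<le> D n" by simp
      show "\<forall>\<^sub>F n in sequentially. D n \<le> ennreal (R n)"
        using DR eventually_sequentially by blast
      show "((\<lambda>_. 0) \<longlongrightarrow> (0::ennreal)) sequentially" by simp
      show "((\<lambda>n. ennreal (R n)) \<longlongrightarrow> 0) sequentially"
        using tendsto_ennrealI[OF Rlim] by simp
    qed
    have K2: "(sqrt K)\<^sup>2 = K" using K0 by simp
    show "let p = (\<lambda>n z. \<Sum>k\<le>n. w n k * taylor_coeff f k * z ^ k) in
             ((\<lambda>n. local_dirichlet \<zeta> (\<lambda>z. f z - p n z)) \<longlonglongrightarrow> 0) \<and>
             (\<forall>n\<ge>1. local_dirichlet \<zeta> (\<lambda>z. f z - p n z) \<le> ennreal ((sqrt K)\<^sup>2) * local_dirichlet \<zeta> f)"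
      unfolding Let_def K2 using Dlim sup unfolding D_def by blast
  qed
qed

end
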